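(* Let $X$ be a finite set with $|X|\ge 3$, let $T\in B(X)$, and let $\mathcal T\subseteq\binom{X}{2}$ be a triplet cover for $T$. Then $|\mathcal T|\ge 2|X|-3$. Moreover this bound is tight: for every $T\in B(X)$ there exists a triplet cover for $T$ of cardinality exactly $2|X|-3$.
   Context: A binary phylogenetic $X$-tree is an unrooted tree $T=(V,E)$ whose leaf set is $X$ and in which every non-leaf vertex is unlabelled and has degree three; $B(X)$ is the set of such trees. Let $\mathring V$ denote the set of interior vertices of $T$. Elements of $\binom{X}{2}$ are written $ab$, triples in $\binom{X}{3}$ are written $abc$. Given $\mathcal T\subseteq\binom{X}{2}$, a triple $abc$ supports $v\in\mathring V$ (relative to $\mathcal T$) if $a,b,c$ lie one in each of the three connected components of $T$ with $v$ and its incident edges removed, and $ab,ac,bc\in\mathcal T$. $\mathcal T$ is a triplet cover for $T$ if every $v\in\mathring V$ is supported by some triple. *)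

theory Defs
  imports Main
begin

definition graph :: "'a set \<Rightarrow> 'a set set \<Rightarrow> bool" where
  "graph V E \<longleftrightarrow> finite V \<and> (\<forall>e\<in>E. e \<subseteq> V \<and> card e = 2)"

definition degree :: "'a set set \<Rightarrow> 'a \<Rightarrow> nat" where
  "degree E v = card {e\<in>E. v \<in> e}"

definition connected_in :: "'a set \<Rightarrow> 'a set set \<Rightarrow> 'a \<Rightarrow> 'a \<Rightarrow> bool" where
  "connected_in W E u w \<longleftrightarrow>
     u \<in> W \<and> w \<in> W \<and> (u, w) \<in> {(x, y). x \<in> W \<and> y \<in> W \<and> {x, y} \<in> E}\<^sup>*"

definition is_cycle :: "'a set set \<Rightarrow> 'a list \<Rightarrow> bool" where
  "is_cycle E cs \<longleftrightarrow> length cs \<ge> 3 \<and> distinct cs \<and>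
     (\<forall>i < length cs. {cs ! i, cs ! ((i + 1) mod length cs)} \<in> E)"

definition is_tree :: "'a set \<Rightarrow> 'a set set \<Rightarrow> bool" where
  "is_tree V E \<longleftrightarrow> graph V E \<and> V \<noteq> {} \<and>
     (\<forall>u\<in>V. \<forall>w\<in>V. connected_in V E u w) \<and> (\<nexists>cs. is_cycle E cs)"

definition binary_phylo_tree :: "'a set \<Rightarrow> 'a set \<Rightarrow> 'a set set \<Rightarrow> bool" where
  "binary_phylo_tree X V E \<longleftrightarrow> is_tree V E \<and> X \<subseteq> V \<and>
     {v\<in>V. degree E v = 1} = X \<and> (\<forall>v\<in>V - X. degree E v = 3)"

definition interior :: "'a set \<Rightarrow> 'a set \<Rightarrow> 'a set" where
  "interior X V = V - X"

text \<open>a, b, c lie one in each of the (three) components of T minus v, i.e. they lie in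
  pairwise distinct components of the graph with v and its incident edges removed, and
  the three pairs belong to the set of pairs \<T>.\<close>
definition supports :: "'a set \<Rightarrow> 'a set set \<Rightarrow> 'a set set \<Rightarrow> 'a \<Rightarrow> 'a \<Rightarrow> 'a \<Rightarrow> 'a \<Rightarrow> bool" where
  "supports V E \<T> a b c v \<longleftrightarrow>
     a \<in> V - {v} \<and> b \<in> V - {v} \<and> c \<in> V - {v} \<and>
     \<not> connected_in (V - {v}) E a b \<and> \<not> connected_in (V - {v}) E a c \<and>
     \<not> connected_in (V - {v}) E b c \<and>
     {a, b} \<in> \<T> \<and> {a, c} \<in> \<T> \<and> {b, c} \<in> \<T>"

definition triplet_cover :: "'a set \<Rightarrow> 'a set \<Rightarrow> 'a set set \<Rightarrow> 'a set set \<Rightarrow> bool" where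
  "triplet_cover X V E \<T> \<longleftrightarrow>
     \<T> \<subseteq> {p. p \<subseteq> X \<and> card p = 2} \<and>
     (\<forall>v\<in>interior X V. \<exists>a\<in>X. \<exists>b\<in>X. \<exists>c\<in>X. supports V E \<T> a b c v)"

end

theory Submission
  imports Defs
begin


definition Rel :: "'a set \<Rightarrow> 'a set set \<Rightarrow> ('a \<times> 'a) set" where
  "Rel W E = {(x, y). x \<in> W \<and> y \<in> W \<and> {x, y} \<in> E}"

definition nbrs :: "'a set set \<Rightarrow> 'a \<Rightarrow> 'a set" where
  "nbrs E v = {y. {v, y} \<in> E}"

lemma conn_iff: "connected_in W E u w \<longleftrightarrow> u \<in> W \<and> w \<in> W \<and> (u, w) \<in> (Rel W E)\<^sup>*"
  unfolding connected_in_def Rel_def by simp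

lemma conn_refl: "x \<in> W \<Longrightarrow> connected_in W E x x"
  by (simp add: conn_iff)

lemma Rel_sym: "(x, y) \<in> Rel W E \<Longrightarrow> (y, x) \<in> Rel W E"
  by (auto simp: Rel_def insert_commute)

lemma conn_sym: "connected_in W E x y \<Longrightarrow> connected_in W E y x"
proof -
  have "sym (Rel W E)" by (auto simp: sym_def intro: Rel_sym)
  then have "sym ((Rel W E)\<^sup>*)" by (rule sym_rtrancl)
  then show "connected_in W E x y \<Longrightarrow> connected_in W E y x"
    by (auto simp: conn_iff sym_def)
qed

lemma conn_trans: "connected_in W E x y \<Longrightarrow> connected_in W E y z \<Longrightarrow> connected_in W E x z"
  by (auto simp: conn_iff)

lemma conn_edge: "x \<in> W \<Longrightarrow> y \<in> W \<Longrightarrow> {x, y} \<in> E \<Longrightarrow> connected_in W E x y"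
  by (auto simp: conn_iff Rel_def)

lemma conn_mono: "connected_in W E x y \<Longrightarrow> W \<subseteq> W' \<Longrightarrow> connected_in W' E x y"
proof -
  assume a: "connected_in W E x y" "W \<subseteq> W'"
  have "Rel W E \<subseteq> Rel W' E" using a(2) by (auto simp: Rel_def)
  then have "(Rel W E)\<^sup>* \<subseteq> (Rel W' E)\<^sup>*" by (rule rtrancl_mono)
  then show ?thesis using a by (auto simp: conn_iff)
qed

lemma conn_in: "connected_in W E x y \<Longrightarrow> x \<in> W \<and> y \<in> W"
  by (simp add: conn_iff)

lemma nbrs_sym: "y \<in> nbrs E v \<longleftrightarrow> v \<in> nbrs E y"
  by (simp add: nbrs_def insert_commute)

lemma degree_nbrs:
  assumes "graph V E"
  shows "degree E v = card (nbrs E v)"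
proof -
  have "bij_betw (\<lambda>y. {v, y}) (nbrs E v) {e\<in>E. v \<in> e}"
  proof (rule bij_betw_imageI)
    show "inj_on (\<lambda>y. {v, y}) (nbrs E v)"
    proof (rule inj_onI)
      fix y y' assume "y \<in> nbrs E v" "y' \<in> nbrs E v" "{v, y} = {v, y'}"
      moreover have "y \<noteq> v" using \<open>y \<in> nbrs E v\<close> assms by (auto simp: nbrs_def graph_def)
      ultimately show "y = y'" by (auto simp: doubleton_eq_iff)
    qed
    show "(\<lambda>y. {v, y}) ` nbrs E v = {e \<in> E. v \<in> e}"
    proof
      show "(\<lambda>y. {v, y}) ` nbrs E v \<subseteq> {e \<in> E. v \<in> e}" by (auto simp: nbrs_def)
      show "{e \<in> E. v \<in> e} \<subseteq> (\<lambda>y. {v, y}) ` nbrs E v"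
      proof
        fix e assume e: "e \<in> {e \<in> E. v \<in> e}"
        then have "card e = 2" using assms by (auto simp: graph_def)
        then obtain p q where "e = {p, q}" "p \<noteq> q" by (auto simp: card_2_iff)
        then have "\<exists>y. e = {v, y}" using e by (auto simp: insert_commute)
        then obtain y where "e = {v, y}" by blast
        then show "e \<in> (\<lambda>y. {v, y}) ` nbrs E v" using e by (auto simp: nbrs_def)
      qed
    qed
  qed
  then show ?thesis unfolding degree_def by (simp add: bij_betw_same_card)
qed

lemma nbrs_sub: "graph V E \<Longrightarrow> nbrs E v \<subseteq> V"
  by (auto simp: graph_def nbrs_def)

lemma nbrs_irrefl: "graph V E \<Longrightarrow> v \<notin> nbrs E v"
  by (auto simp: graph_def nbrs_def)

lemma edge_in: "graph V E \<Longrightarrow> {x, y} \<in> E \<Longrightarrow> x \<in> V \<and> y \<in> V \<and> x \<noteq> y"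
  by (auto simp: graph_def)



lemma simple_path:
  assumes "(p, q) \<in> R\<^sup>*"
  shows "\<exists>xs. xs \<noteq> [] \<and> hd xs = p \<and> last xs = q \<and> distinct xs \<and>
    (\<forall>i. Suc i < length xs \<longrightarrow> (xs ! i, xs ! Suc i) \<in> R) \<and>
    (\<forall>x\<in>set xs. x = p \<or> (\<exists>y. (y, x) \<in> R))"
  using assms
proof (induction rule: rtrancl_induct)
  case base
  show ?case by (rule exI[of _ "[p]"]) auto
next
  case (step q r)
  then obtain xs where xs: "xs \<noteq> []" "hd xs = p" "last xs = q" "distinct xs"
    "\<forall>i. Suc i < length xs \<longrightarrow> (xs ! i, xs ! Suc i) \<in> R"
    "\<forall>x\<in>set xs. x = p \<or> (\<exists>y. (y, x) \<in> R)" by blast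
  show ?case
  proof (cases "r \<in> set xs")
    case True
    then obtain j where j: "j < length xs" "xs ! j = r" by (auto simp: in_set_conv_nth)
    let ?ys = "take (Suc j) xs"
    have "?ys \<noteq> []" using xs(1) by simp
    moreover have "hd ?ys = p" using xs(1,2) by (simp add: hd_take)
    moreover have "last ?ys = r"
    proof -
      have "last ?ys = ?ys ! (length ?ys - 1)" by (rule last_conv_nth) (use xs(1) in simp)
      then show ?thesis using j by simp
    qed
    moreover have "distinct ?ys" using xs(4) by simp
    moreover have "\<forall>i. Suc i < length ?ys \<longrightarrow> (?ys ! i, ?ys ! Suc i) \<in> R"
      using xs(5) j by auto
    moreover have "\<forall>x\<in>set ?ys. x = p \<or> (\<exists>y. (y, x) \<in> R)"
      using xs(6) by (meson in_set_takeD)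
    ultimately show ?thesis by blast
  next
    case False
    let ?ys = "xs @ [r]"
    have "?ys \<noteq> []" by simp
    moreover have "hd ?ys = p" using xs(1,2) by simp
    moreover have "last ?ys = r" by simp
    moreover have "distinct ?ys" using xs(4) False by simp
    moreover have "\<forall>i. Suc i < length ?ys \<longrightarrow> (?ys ! i, ?ys ! Suc i) \<in> R"
    proof (intro allI impI)
      fix i assume i: "Suc i < length ?ys"
      show "(?ys ! i, ?ys ! Suc i) \<in> R"
      proof (cases "Suc i < length xs")
        case True then show ?thesis using xs(5) by (simp add: nth_append)
      next
        case False
        then have "Suc i = length xs" using i by simp
        moreover have "xs ! i = q"
        proof -
          have "i = length xs - 1" using \<open>Suc i = length xs\<close> by simp
          then show ?thesis using xs(1,3) by (simp add: last_conv_nth)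
        qed
        ultimately show ?thesis using step.hyps(2) by (simp add: nth_append)
      qed
    qed
    moreover have "\<forall>x\<in>set ?ys. x = p \<or> (\<exists>y. (y, x) \<in> R)"
      using xs(6) step.hyps(2) by auto
    ultimately show ?thesis by blast
  qed
qed

lemma nbrs_disconnected:
  assumes tree: "is_tree V E" and wp: "{w, p} \<in> E" and wq: "{w, q} \<in> E" and pq: "p \<noteq> q"
  shows "\<not> connected_in (V - {w}) E p q"
proof
  assume c: "connected_in (V - {w}) E p q"
  let ?W = "V - {w}"
  from c have pW: "p \<in> ?W" and r: "(p, q) \<in> (Rel ?W E)\<^sup>*" by (auto simp: conn_iff)
  from simple_path[OF r] obtain xs where xs: "xs \<noteq> []" "hd xs = p" "last xs = q" "distinct xs"
    "\<forall>i. Suc i < length xs \<longrightarrow> (xs ! i, xs ! Suc i) \<in> Rel ?W E"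
    "\<forall>x\<in>set xs. x = p \<or> (\<exists>y. (y, x) \<in> Rel ?W E)" by blast
  have setW: "set xs \<subseteq> ?W" using xs(6) pW by (auto simp: Rel_def)
  define L where "L = length xs"
  have L2: "L \<ge> 2"
  proof (rule ccontr)
    assume "\<not> L \<ge> 2"
    moreover have "L \<noteq> 0" using xs(1) L_def by simp
    ultimately have "length xs = 1" using L_def by linarith
    then obtain x where "xs = [x]" by (auto simp: length_Suc_conv)
    then show False using xs(2,3) pq by simp
  qed
  have hd0: "xs ! 0 = p" using xs(1,2) by (simp add: hd_conv_nth)
  have lastL: "xs ! (L - 1) = q" using xs(1,3) L_def by (simp add: last_conv_nth)
  let ?cs = "w # xs"
  have "is_cycle E ?cs"
    unfolding is_cycle_def
  proof (intro conjI allI impI)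
    show "3 \<le> length ?cs" using L2 L_def by simp
    show "distinct ?cs" using xs(4) setW by auto
    fix i assume i: "i < length ?cs"
    then have iL: "i \<le> L" using L_def by simp
    show "{?cs ! i, ?cs ! ((i + 1) mod length ?cs)} \<in> E"
    proof (cases "i = 0")
      case True
      have "(1::nat) mod Suc L = 1" using L2 by simp
      then show ?thesis using True wp hd0 L_def by simp
    next
      case False
      show ?thesis
      proof (cases "i = L")
        case True
        have "?cs ! i = q" using True False lastL by (cases i) auto
        moreover have "(i + 1) mod length ?cs = 0" using True L_def by simp
        ultimately show ?thesis using wq by (simp add: insert_commute)
      next
        case False2: False
        have m: "(i + 1) mod length ?cs = i + 1" using iL False2 L_def by simp
        obtain k where k: "i = Suc k" using False by (cases i) auto
        have "Suc k < length xs" using iL False2 k L_def by simp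
        then have "(xs ! k, xs ! Suc k) \<in> Rel ?W E" using xs(5) by blast
        then show ?thesis using m k by (simp add: Rel_def)
      qed
    qed
  qed
  then show False using tree by (auto simp: is_tree_def)
qed



definition side :: "'a set \<Rightarrow> 'a set set \<Rightarrow> 'a \<Rightarrow> 'a \<Rightarrow> 'a set" where
  "side V E v w = {x. connected_in (V - {v}) E w x}"

lemma conn_avoid:
  assumes "connected_in W E p x" "\<not> connected_in W E p v"
  shows "connected_in (W - {v}) E p x"
proof -
  from assms(1) have pW: "p \<in> W" and r: "(p, x) \<in> (Rel W E)\<^sup>*" unfolding conn_iff by blast+
  have "(p, x) \<in> (Rel (W - {v}) E)\<^sup>*" using r
  proof (induction rule: rtrancl_induct)
    case base then show ?case by simp
  next
    case (step y z)
    have "z \<in> W" using step.hyps(2) by (simp add: Rel_def)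
    then have "connected_in W E p z" using rtrancl_into_rtrancl[OF step.hyps] pW by (simp add: conn_iff)
    then have "z \<noteq> v" using assms(2) by metis
    have "y \<in> W" using step.hyps(2) by (simp add: Rel_def)
    then have "connected_in W E p y" using step.hyps(1) pW by (simp add: conn_iff)
    then have "y \<noteq> v" using assms(2) by metis
    have "(y, z) \<in> Rel (W - {v}) E" using step.hyps(2) \<open>z \<noteq> v\<close> \<open>y \<noteq> v\<close> unfolding Rel_def by blast
    then show ?case using step.IH by simp
  qed
  moreover have "p \<noteq> v"
  proof
    assume "p = v" then show False using assms(2) conn_refl[OF pW] by simp
  qed
  moreover have "x \<in> W" using assms(1) by (simp add: conn_iff)
  moreover have "x \<noteq> v"
  proof
    assume "x = v" then show False using assms by simp
  qed
  ultimately show ?thesis using pW by (simp add: conn_iff)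
qed

lemma tree_graph: "is_tree V E \<Longrightarrow> graph V E"
  by (simp add: is_tree_def)

lemma side_sub:
  assumes tree: "is_tree V E" and vw: "{v, w} \<in> E" and ww1: "{w, w1} \<in> E" and ne: "w1 \<noteq> v"
  shows "side V E w w1 \<subset> side V E v w"
proof
  have g: "graph V E" using tree by (rule tree_graph)
  have wv: "w \<noteq> v" "w \<in> V" "v \<in> V" using edge_in[OF g vw] by auto
  have w1: "w1 \<in> V" "w1 \<noteq> w" using edge_in[OF g ww1] by auto
  show "side V E w w1 \<subseteq> side V E v w"
  proof
    fix x assume "x \<in> side V E w w1"
    then have c: "connected_in (V - {w}) E w1 x" by (simp add: side_def)
    have "\<not> connected_in (V - {w}) E w1 v"
      using nbrs_disconnected[OF tree ww1 _ ne] vw by (simp add: insert_commute)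
    then have "connected_in (V - {w} - {v}) E w1 x" by (rule conn_avoid[OF c])
    then have c2: "connected_in (V - {v}) E w1 x" by (rule conn_mono) auto
    have "connected_in (V - {v}) E w w1" using wv w1 ne ww1 by (intro conn_edge) auto
    then have "connected_in (V - {v}) E w x" by (rule conn_trans[OF _ c2])
    then show "x \<in> side V E v w" by (simp add: side_def)
  qed
  have "w \<in> side V E v w" using wv by (simp add: side_def conn_refl)
  moreover have "w \<notin> side V E w w1" by (auto simp: side_def conn_iff)
  ultimately show "side V E w w1 \<noteq> side V E v w" by blast
qed

lemma side_finite: "graph V E \<Longrightarrow> finite (side V E v w)"
  by (rule finite_subset[of _ V]) (auto simp: side_def conn_iff graph_def)

lemma conn_closed:
  assumes "connected_in V E s t" "s \<in> A" "\<forall>z\<in>A. nbrs E z \<subseteq> A"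
  shows "t \<in> A"
proof -
  from assms(1) have "(s, t) \<in> (Rel V E)\<^sup>*" by (simp add: conn_iff)
  then show ?thesis
  proof (induction rule: rtrancl_induct)
    case base then show ?case using assms(2) .
  next
    case (step y z)
    then have "z \<in> nbrs E y" by (simp add: Rel_def nbrs_def)
    then show ?case using step.IH assms(3) by blast
  qed
qed

lemma conn_to_nbr:
  assumes "connected_in V E y u" "y \<noteq> u"
  shows "\<exists>nb\<in>nbrs E u. connected_in (V - {u}) E y nb"
proof -
  from assms(1) have yV: "y \<in> V" and r: "(y, u) \<in> (Rel V E)\<^sup>*" by (auto simp: conn_iff)
  have "\<And>t. (y, t) \<in> (Rel V E)\<^sup>* \<Longrightarrow>
    (t \<noteq> u \<and> connected_in (V - {u}) E y t) \<or> (\<exists>nb\<in>nbrs E u. connected_in (V - {u}) E y nb)"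
  proof -
    fix t assume "(y, t) \<in> (Rel V E)\<^sup>*"
    then show "(t \<noteq> u \<and> connected_in (V - {u}) E y t) \<or> (\<exists>nb\<in>nbrs E u. connected_in (V - {u}) E y nb)"
    proof (induction rule: rtrancl_induct)
      case base then show ?case using yV assms(2) by (simp add: conn_refl)
    next
      case (step s t)
      from step.IH show ?case
      proof
        assume a: "s \<noteq> u \<and> connected_in (V - {u}) E y s"
        show ?thesis
        proof (cases "t = u")
          case True
          then have "s \<in> nbrs E u" using step.hyps(2) by (simp add: Rel_def nbrs_def insert_commute)
          have "connected_in (V - {u}) E y s" using a by simp
          then show ?thesis using \<open>s \<in> nbrs E u\<close> by (intro disjI2 bexI)
        next
          case False
          then have "connected_in (V - {u}) E s t" using step.hyps(2) a by (intro conn_edge) (auto simp: Rel_def)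
          then have "connected_in (V - {u}) E y t" using a conn_trans by metis
          then show ?thesis using False by simp
        qed
      qed simp
    qed
  qed
  from this[OF r] show ?thesis by simp
qed

lemma isolated:
  assumes "nbrs E a = {v}" "connected_in (V - {v}) E a y"
  shows "y = a"
proof -
  from assms(2) have "(a, y) \<in> (Rel (V - {v}) E)\<^sup>*" by (simp add: conn_iff)
  then show ?thesis
  proof (induction rule: rtrancl_induct)
    case base then show ?case by simp
  next
    case (step s t)
    then have "t \<in> nbrs E a" by (simp add: Rel_def nbrs_def)
    then show ?case using assms(1) step.hyps(2) by (auto simp: Rel_def)
  qed
qed

lemma same: "connected_in W E p m \<Longrightarrow> connected_in W E q m \<Longrightarrow> connected_in W E p q"
  by (rule conn_trans[OF _ conn_sym])

lemma pigeon: "P x \<or> Q x \<Longrightarrow> P y \<or> Q y \<Longrightarrow> P z \<or> Q z \<Longrightarrow> (\<forall>p q. P p \<longrightarrow> P q \<longrightarrow> R p q)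
  \<Longrightarrow> (\<forall>p q. Q p \<longrightarrow> Q q \<longrightarrow> R p q) \<Longrightarrow> \<not> R x y \<Longrightarrow> \<not> R x z \<Longrightarrow> \<not> R y z \<Longrightarrow> False"
  by blast

lemma three_classes:
  assumes conn: "\<forall>y\<in>V. connected_in V E y u"
    and nb: "nbrs E u \<subseteq> {n1, n2, n3}"
    and iso: "\<forall>y. connected_in (V - {u}) E n1 y \<longrightarrow> y = n1"
    and xyz: "x \<in> V - {u}" "y \<in> V - {u}" "z \<in> V - {u}"
    and d: "\<not> connected_in (V - {u}) E x y" "\<not> connected_in (V - {u}) E x z"
      "\<not> connected_in (V - {u}) E y z"
  shows "n1 \<in> {x, y, z}"
proof -
  let ?C = "connected_in (V - {u}) E"
  have cls: "\<And>t. t \<in> V - {u} \<Longrightarrow> t = n1 \<or> ?C t n2 \<or> ?C t n3"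
  proof -
    fix t assume t: "t \<in> V - {u}"
    have "connected_in V E t u" using conn t by simp
    from conn_to_nbr[OF this] t obtain nb where nb1: "nb \<in> nbrs E u" "?C t nb" by auto
    have "nb = n1 \<or> nb = n2 \<or> nb = n3" using nb nb1(1) by auto
    then show "t = n1 \<or> ?C t n2 \<or> ?C t n3"
    proof (elim disjE)
      assume "nb = n1"
      then have "?C t n1" using nb1(2) by simp
      then have "?C n1 t" by (rule conn_sym)
      then have "t = n1" by (rule iso[rule_format])
      then show ?thesis by simp
    qed (use nb1 in simp_all)
  qed
  show ?thesis
  proof (rule ccontr)
    assume "n1 \<notin> {x, y, z}"
    then have "n1 \<noteq> x" "n1 \<noteq> y" "n1 \<noteq> z" by simp_all
    then have "x \<noteq> n1" "y \<noteq> n1" "z \<noteq> n1" by (simp_all add: eq_commute)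
    then have h: "?C x n2 \<or> ?C x n3" "?C y n2 \<or> ?C y n3" "?C z n2 \<or> ?C z n3"
      using cls[OF xyz(1)] cls[OF xyz(2)] cls[OF xyz(3)] by simp_all
    have s2: "\<forall>p q. ?C p n2 \<longrightarrow> ?C q n2 \<longrightarrow> ?C p q" using same by (intro allI impI)
    have s3: "\<forall>p q. ?C p n3 \<longrightarrow> ?C q n3 \<longrightarrow> ?C p q" using same by (intro allI impI)
    show False
      by (rule pigeon[where P="\<lambda>p. ?C p n2" and Q="\<lambda>p. ?C p n3" and R="?C", OF h s2 s3 d])
  qed
qed



lemma bpt_tree: "binary_phylo_tree X V E \<Longrightarrow> is_tree V E"
  by (simp add: binary_phylo_tree_def)

lemma bpt_graph: "binary_phylo_tree X V E \<Longrightarrow> graph V E"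
  by (simp add: binary_phylo_tree_def is_tree_def)

lemma bpt_conn: "binary_phylo_tree X V E \<Longrightarrow> x \<in> V \<Longrightarrow> y \<in> V \<Longrightarrow> connected_in V E x y"
  by (simp add: binary_phylo_tree_def is_tree_def)

lemma bpt_XV: "binary_phylo_tree X V E \<Longrightarrow> X \<subseteq> V"
  by (simp add: binary_phylo_tree_def)

lemma bpt_leaf:
  assumes "binary_phylo_tree X V E" "x \<in> X"
  shows "\<exists>y. nbrs E x = {y}"
proof -
  have "x \<in> {v\<in>V. degree E v = 1}" using assms by (simp add: binary_phylo_tree_def)
  then have "degree E x = 1" by simp
  then have "card (nbrs E x) = 1" using degree_nbrs[OF bpt_graph[OF assms(1)]] by simp
  then show ?thesis by (simp add: card_1_singleton_iff)
qed

lemma bpt_leaf_nbr: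
  assumes "binary_phylo_tree X V E" "x \<in> X" "y \<in> nbrs E x"
  shows "nbrs E x = {y}"
  using bpt_leaf[OF assms(1,2)] assms(3) by auto

lemma bpt_int:
  assumes "binary_phylo_tree X V E" "x \<in> V - X"
  shows "\<exists>p q r. nbrs E x = {p, q, r} \<and> p \<noteq> q \<and> q \<noteq> r \<and> p \<noteq> r"
proof -
  have "degree E x = 3" using assms by (simp add: binary_phylo_tree_def)
  then have "card (nbrs E x) = 3" using degree_nbrs[OF bpt_graph[OF assms(1)]] by simp
  then show ?thesis by (simp add: card_3_iff)
qed

lemma nbr_edge: "y \<in> nbrs E x \<longleftrightarrow> {x, y} \<in> E"
  by (simp add: nbrs_def)

lemma leaf_nbr_int:
  assumes bpt: "binary_phylo_tree X V E" and fin: "finite X" and c3: "card X \<ge> 3"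
    and x: "x \<in> X" and y: "y \<in> nbrs E x"
  shows "y \<in> V - X"
proof
  have g: "graph V E" using bpt by (rule bpt_graph)
  show "y \<in> V" using y nbrs_sub[OF g] by auto
  show "y \<notin> X"
  proof
    assume yX: "y \<in> X"
    have nx: "nbrs E x = {y}" using bpt_leaf_nbr[OF bpt x y] .
    have "x \<in> nbrs E y" using y nbrs_sym by metis
    then have ny: "nbrs E y = {x}" using bpt_leaf_nbr[OF bpt yX] by simp
    have "V \<subseteq> {x, y}"
    proof
      fix z assume "z \<in> V"
      have xV: "x \<in> V" using x bpt_XV[OF bpt] by auto
      have "connected_in V E x z" using bpt_conn[OF bpt xV \<open>z \<in> V\<close>] .
      moreover have "\<forall>t\<in>{x, y}. nbrs E t \<subseteq> {x, y}" using nx ny by auto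
      ultimately show "z \<in> {x, y}" using conn_closed by (metis insertI1)
    qed
    then have "X \<subseteq> {x, y}" using bpt_XV[OF bpt] by auto
    then have "card X \<le> card {x, y}" by (intro card_mono) auto
    also have "\<dots> \<le> 2" by (rule card_insert_le_m1) auto
    finally show False using c3 by simp
  qed
qed

lemma side_leaf:
  assumes bpt: "binary_phylo_tree X V E"
  shows "{v, w} \<in> E \<Longrightarrow> \<exists>x\<in>X. connected_in (V - {v}) E w x"
proof (induction "card (side V E v w)" arbitrary: v w rule: less_induct)
  case less
  have g: "graph V E" using bpt by (rule bpt_graph)
  have tree: "is_tree V E" using bpt by (rule bpt_tree)
  have wv: "w \<in> V" "w \<noteq> v" using edge_in[OF g less.prems] by auto
  show ?case
  proof (cases "w \<in> X")
    case True
    then show ?thesis using wv by (intro bexI[of _ w] conn_refl) auto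
  next
    case False
    then obtain p q r where pqr: "nbrs E w = {p, q, r}" "p \<noteq> q" "q \<noteq> r" "p \<noteq> r"
      using bpt_int[OF bpt] wv by blast
    have "\<exists>w1. w1 \<in> nbrs E w \<and> w1 \<noteq> v" using pqr by auto
    then obtain w1 where w1: "{w, w1} \<in> E" "w1 \<noteq> v" by (auto simp: nbrs_def)
    have sub: "side V E w w1 \<subset> side V E v w" by (rule side_sub[OF tree less.prems w1])
    then have "card (side V E w w1) < card (side V E v w)"
      by (rule psubset_card_mono[OF side_finite[OF g]])
    from less.hyps[OF this w1(1)] obtain x where "x \<in> X" "connected_in (V - {w}) E w1 x" by blast
    then have "x \<in> side V E w w1" by (simp add: side_def)
    then have "x \<in> side V E v w" using sub by blast
    then show ?thesis using \<open>x \<in> X\<close> by (auto simp: side_def)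
  qed
qed

lemma allpairs_cover:
  assumes bpt: "binary_phylo_tree X V E"
  shows "triplet_cover X V E {p. p \<subseteq> X \<and> card p = 2}"
  unfolding triplet_cover_def
proof (intro conjI ballI)
  show "{p. p \<subseteq> X \<and> card p = 2} \<subseteq> {p. p \<subseteq> X \<and> card p = 2}" by simp
  fix v assume "v \<in> interior X V"
  then have v: "v \<in> V - X" by (simp add: interior_def)
  have tree: "is_tree V E" using bpt by (rule bpt_tree)
  obtain n1 n2 n3 where n: "nbrs E v = {n1, n2, n3}" "n1 \<noteq> n2" "n2 \<noteq> n3" "n1 \<noteq> n3"
    using bpt_int[OF bpt v] by blast
  have e: "{v, n1} \<in> E" "{v, n2} \<in> E" "{v, n3} \<in> E" using n(1) by (auto simp: nbrs_def)
  obtain x1 where x1: "x1 \<in> X" "connected_in (V - {v}) E n1 x1" using side_leaf[OF bpt e(1)] by blast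
  obtain x2 where x2: "x2 \<in> X" "connected_in (V - {v}) E n2 x2" using side_leaf[OF bpt e(2)] by blast
  obtain x3 where x3: "x3 \<in> X" "connected_in (V - {v}) E n3 x3" using side_leaf[OF bpt e(3)] by blast
  let ?C = "connected_in (V - {v}) E"
  have dis: "\<not> ?C xi xj"
    if "?C ni xi" "?C nj xj" "ni \<noteq> nj" "{v, ni} \<in> E" "{v, nj} \<in> E" for ni nj xi xj
  proof
    assume "?C xi xj"
    then have "?C ni xj" using that(1) conn_trans by metis
    then have "?C ni nj" using that(2) same by metis
    then show False using nbrs_disconnected[OF tree that(4,5,3)] by simp
  qed
  have d12: "\<not> ?C x1 x2" by (rule dis[OF x1(2) x2(2) n(2) e(1,2)])
  have d13: "\<not> ?C x1 x3" by (rule dis[OF x1(2) x3(2) n(4) e(1,3)])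
  have d23: "\<not> ?C x2 x3" by (rule dis[OF x2(2) x3(2) n(3) e(2,3)])
  have inV: "x1 \<in> V - {v}" "x2 \<in> V - {v}" "x3 \<in> V - {v}"
    using conn_in x1(2) x2(2) x3(2) by metis+
  have ne: "x1 \<noteq> x2" "x1 \<noteq> x3" "x2 \<noteq> x3"
    using d12 d13 d23 conn_refl inV by metis+
  have "supports V E {p. p \<subseteq> X \<and> card p = 2} x1 x2 x3 v"
    unfolding supports_def
    using x1(1) x2(1) x3(1) inV d12 d13 d23 ne by auto
  then show "\<exists>a\<in>X. \<exists>b\<in>X. \<exists>c\<in>X. supports V E {p. p \<subseteq> X \<and> card p = 2} a b c v"
    using x1(1) x2(1) x3(1) by blast
qed



lemma cherry:
  assumes bpt: "binary_phylo_tree X V E" and fin: "finite X" and c4: "card X \<ge> 4"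
  shows "\<exists>a b v u. a \<in> X \<and> b \<in> X \<and> a \<noteq> b \<and> v \<in> V - X \<and> u \<in> V - X \<and>
    nbrs E v = {a, b, u} \<and> nbrs E a = {v} \<and> nbrs E b = {v}"
proof -
  have g: "graph V E" using bpt by (rule bpt_graph)
  have tree: "is_tree V E" using bpt by (rule bpt_tree)
  have XV: "X \<subseteq> V" using bpt by (rule bpt_XV)
  have c3: "card X \<ge> 3" using c4 by simp
  define P where "P = {(v, w). v \<in> V - X \<and> w \<in> V - X \<and> {v, w} \<in> E}"
  have "P \<noteq> {}"
  proof -
    have "X \<noteq> {}" using c4 by auto
    then obtain x where x: "x \<in> X" by blast
    obtain y where ny: "nbrs E x = {y}" using bpt_leaf[OF bpt x] by blast
    have yI: "y \<in> V - X" using leaf_nbr_int[OF bpt fin c3 x] ny by simp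
    obtain p q r where pqr: "nbrs E y = {p, q, r}" "p \<noteq> q" "q \<noteq> r" "p \<noteq> r"
      using bpt_int[OF bpt yI] by blast
    have pqrV: "p \<in> V" "q \<in> V" "r \<in> V" using pqr(1) nbrs_sub[OF g] by auto
    show ?thesis
    proof (cases "p \<in> X \<and> q \<in> X \<and> r \<in> X")
      case True
      have pin: "p \<in> nbrs E y" "q \<in> nbrs E y" "r \<in> nbrs E y" using pqr(1) by simp_all
      have yn: "y \<in> nbrs E p" "y \<in> nbrs E q" "y \<in> nbrs E r"
        using pin by (simp_all add: nbrs_def insert_commute)
      have np: "nbrs E p = {y}" "nbrs E q = {y}" "nbrs E r = {y}"
        using bpt_leaf_nbr[OF bpt _ yn(1)] bpt_leaf_nbr[OF bpt _ yn(2)] bpt_leaf_nbr[OF bpt _ yn(3)] True by simp_all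
      have cl: "\<forall>t\<in>{y, p, q, r}. nbrs E t \<subseteq> {y, p, q, r}" using np pqr(1) by auto
      have "V \<subseteq> {y, p, q, r}"
      proof
        fix z assume "z \<in> V"
        have "connected_in V E y z" using bpt_conn[OF bpt _ \<open>z \<in> V\<close>] yI by simp
        then show "z \<in> {y, p, q, r}" by (rule conn_closed) (use cl in simp_all)
      qed
      then have "X \<subseteq> {p, q, r}" using XV yI by auto
      then have "card X \<le> card {p, q, r}" by (intro card_mono) auto
      also have "\<dots> \<le> 3" by (simp add: card_insert_if)
      finally show ?thesis using c4 by simp
    next
      case False
      then obtain w where "w \<in> {p, q, r}" "w \<notin> X" by auto
      then have "(y, w) \<in> P" using pqr(1) pqrV yI unfolding P_def by (auto simp: nbrs_def)
      then show ?thesis by blast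
    qed
  qed
  then obtain v0 w0 where "(v0, w0) \<in> P" by auto
  then obtain vw where vwP: "vw \<in> P" and minv: "\<forall>z. z \<in> P \<longrightarrow> card (side V E (fst vw) (snd vw)) \<le> card (side V E (fst z) (snd z))"
    using ex_has_least_nat[of "\<lambda>z. z \<in> P" "(v0, w0)" "\<lambda>z. card (side V E (fst z) (snd z))"] by blast
  obtain v w where vw: "vw = (v, w)" by (cases vw)
  have v: "v \<in> V - X" and w: "w \<in> V - X" and e: "{v, w} \<in> E" using vwP vw unfolding P_def by auto
  have min: "\<And>a b. (a, b) \<in> P \<Longrightarrow> card (side V E v w) \<le> card (side V E a b)"
    using minv vw by fastforce
  obtain p q r where pqr: "nbrs E w = {p, q, r}" "p \<noteq> q" "q \<noteq> r" "p \<noteq> r"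
    using bpt_int[OF bpt w] by blast
  have "v \<in> nbrs E w" using e by (simp add: nbrs_def insert_commute)
  then have "v = p \<or> v = q \<or> v = r" using pqr(1) by simp
  then have "\<exists>w1 w2. nbrs E w = {v, w1, w2} \<and> w1 \<noteq> w2 \<and> w1 \<noteq> v \<and> w2 \<noteq> v"
  proof (elim disjE)
    assume "v = p" then show ?thesis using pqr by (intro exI[of _ q] exI[of _ r]) simp
  next
    assume "v = q" then show ?thesis using pqr by (intro exI[of _ p] exI[of _ r]) (simp add: insert_commute)
  next
    assume "v = r" then show ?thesis using pqr by (intro exI[of _ p] exI[of _ q]) (simp add: insert_commute)
  qed
  then obtain w1 w2 where ww: "nbrs E w = {v, w1, w2}" "w1 \<noteq> w2" "w1 \<noteq> v" "w2 \<noteq> v"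
    by blast
  have leaf: "w' \<in> X" if "w' \<in> nbrs E w" "w' \<noteq> v" for w'
  proof (rule ccontr)
    assume nX: "w' \<notin> X"
    have ew: "{w, w'} \<in> E" using that(1) by (simp add: nbrs_def)
    have "w' \<in> V" using that(1) nbrs_sub[OF g] by auto
    then have "(w, w') \<in> P" using nX w ew unfolding P_def by auto
    then have le: "card (side V E v w) \<le> card (side V E w w')" by (rule min)
    have "side V E w w' \<subset> side V E v w" by (rule side_sub[OF tree e ew that(2)])
    then have "card (side V E w w') < card (side V E v w)"
      by (rule psubset_card_mono[OF side_finite[OF g]])
    then show False using le by simp
  qed
  have w1X: "w1 \<in> X" using leaf ww by auto
  have w2X: "w2 \<in> X" using leaf ww by auto
  have "w \<in> nbrs E w1" "w \<in> nbrs E w2" using ww(1) nbrs_sym by (metis insertI1 insertI2)+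
  then have n1: "nbrs E w1 = {w}" and n2: "nbrs E w2 = {w}"
    using bpt_leaf_nbr[OF bpt w1X] bpt_leaf_nbr[OF bpt w2X] by auto
  have "nbrs E w = {w1, w2, v}" using ww(1) by auto
  then show ?thesis using w1X w2X ww(2) w v n1 n2
    by (intro exI[of _ w1] exI[of _ w2] exI[of _ w] exI[of _ v]) simp
qed



lemma cyc_nb:
  assumes cyc: "is_cycle E cs" and x: "x \<in> set cs"
  shows "\<exists>y1 y2. y1 \<noteq> y2 \<and> {x, y1} \<in> E \<and> {x, y2} \<in> E"
proof -
  define n where "n = length cs"
  have n3: "n \<ge> 3" and dist: "distinct cs"
    and ed: "\<forall>i<n. {cs ! i, cs ! ((i + 1) mod n)} \<in> E"
    using cyc by (auto simp: is_cycle_def n_def)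
  obtain i where i: "i < n" "cs ! i = x" using x by (auto simp: in_set_conv_nth n_def)
  define j where "j = (if i = 0 then n - 1 else i - 1)"
  define k where "k = (if i = n - 1 then 0 else i + 1)"
  have jn: "j < n" and kn: "k < n" using i n3 by (auto simp: j_def k_def)
  have jk: "j \<noteq> k" using i n3 by (auto simp: j_def k_def)
  have "(j + 1) mod n = i" using i n3 by (auto simp: j_def)
  then have e1: "{cs ! j, x} \<in> E" using ed jn i by metis
  have "(i + 1) mod n = k" using i n3 by (auto simp: k_def)
  then have e2: "{x, cs ! k} \<in> E" using ed i by metis
  have "cs ! j \<noteq> cs ! k" using dist jn kn jk by (simp add: nth_eq_iff_index_eq n_def)
  then show ?thesis using e1 e2 by (intro exI[of _ "cs ! j"] exI[of _ "cs ! k"]) (simp add: insert_commute)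
qed

locale cherry_ctx =
  fixes X V :: "'a set" and E :: "'a set set" and a b v u :: 'a
  assumes bpt: "binary_phylo_tree X V E"
    and aX: "a \<in> X" and bX: "b \<in> X" and ab: "a \<noteq> b"
    and vI: "v \<in> V - X" and uI: "u \<in> V - X"
    and nv: "nbrs E v = {a, b, u}" and na: "nbrs E a = {v}" and nb: "nbrs E b = {v}"
begin

abbreviation "V' \<equiv> V - {a, v}"
abbreviation "E' \<equiv> {e\<in>E. v \<notin> e} \<union> {{b, u}}"

lemma g: "graph V E" using bpt by (rule bpt_graph)
lemma tree: "is_tree V E" using bpt by (rule bpt_tree)
lemma XV: "X \<subseteq> V" using bpt by (rule bpt_XV)

lemma dist: "u \<noteq> v" "u \<noteq> a" "u \<noteq> b" "v \<noteq> a" "v \<noteq> b"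
proof -
  have "u \<in> nbrs E v" using nv by simp
  then show "u \<noteq> v" using nbrs_irrefl[OF g] by auto
  show "u \<noteq> a" "u \<noteq> b" "v \<noteq> a" "v \<noteq> b" using uI vI aX bX by auto
qed

lemma edges: "{a, v} \<in> E" "{b, v} \<in> E" "{v, u} \<in> E"
proof -
  have "v \<in> nbrs E a" "v \<in> nbrs E b" "u \<in> nbrs E v" using na nb nv by simp_all
  then show "{a, v} \<in> E" "{b, v} \<in> E" "{v, u} \<in> E" by (simp_all add: nbrs_def)
qed

lemma inV: "a \<in> V" "b \<in> V" "u \<in> V" "v \<in> V" using aX bX XV uI vI by auto

lemma a_edge: "{a, y} \<in> E \<Longrightarrow> y = v"
proof -
  assume "{a, y} \<in> E"
  then have "y \<in> nbrs E a" by (simp add: nbrs_def)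
  then show "y = v" using na by simp
qed

lemma b_edge: "{b, y} \<in> E \<Longrightarrow> y = v"
proof -
  assume "{b, y} \<in> E"
  then have "y \<in> nbrs E b" by (simp add: nbrs_def)
  then show "y = v" using nb by simp
qed

lemma v_edge: "{v, y} \<in> E \<Longrightarrow> y = a \<or> y = b \<or> y = u"
proof -
  assume "{v, y} \<in> E"
  then have "y \<in> nbrs E v" by (simp add: nbrs_def)
  then show ?thesis using nv by simp
qed

lemma E'_edge: "{x, y} \<in> E' \<longleftrightarrow> ({x, y} \<in> E \<and> x \<noteq> v \<and> y \<noteq> v) \<or> {x, y} = {b, u}"
  by auto

lemma nbrs'_b: "nbrs E' b = {u}"
proof -
  have "y \<in> nbrs E' b \<longleftrightarrow> y = u" for y
  proof
    assume "y \<in> nbrs E' b"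
    then have "({b, y} \<in> E \<and> b \<noteq> v \<and> y \<noteq> v) \<or> {b, y} = {b, u}" by (auto simp: nbrs_def)
    then show "y = u" using b_edge dist by (auto simp: doubleton_eq_iff)
  next
    assume "y = u" then show "y \<in> nbrs E' b" by (simp add: nbrs_def)
  qed
  then show ?thesis by auto
qed

lemma nbrs'_u: "nbrs E' u = insert b (nbrs E u - {v})"
proof -
  have "y \<in> nbrs E' u \<longleftrightarrow> y = b \<or> (y \<in> nbrs E u \<and> y \<noteq> v)" for y
  proof
    assume "y \<in> nbrs E' u"
    then have "({u, y} \<in> E \<and> u \<noteq> v \<and> y \<noteq> v) \<or> {u, y} = {b, u}" by (auto simp: nbrs_def)
    then show "y = b \<or> (y \<in> nbrs E u \<and> y \<noteq> v)" using dist by (auto simp: doubleton_eq_iff nbrs_def)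
  next
    assume "y = b \<or> (y \<in> nbrs E u \<and> y \<noteq> v)"
    then show "y \<in> nbrs E' u" using dist by (auto simp: nbrs_def insert_commute)
  qed
  then show ?thesis by auto
qed

lemma nbrs'_other: "x \<notin> {a, v, b, u} \<Longrightarrow> nbrs E' x = nbrs E x"
proof -
  assume x: "x \<notin> {a, v, b, u}"
  have "y \<in> nbrs E' x \<longleftrightarrow> y \<in> nbrs E x" for y
  proof
    assume "y \<in> nbrs E' x"
    then have "({x, y} \<in> E \<and> x \<noteq> v \<and> y \<noteq> v) \<or> {x, y} = {b, u}" by (auto simp: nbrs_def)
    then show "y \<in> nbrs E x" using x by (auto simp: doubleton_eq_iff nbrs_def)
  next
    assume y: "y \<in> nbrs E x"
    have "y \<noteq> v"
    proof
      assume "y = v"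
      then have "{v, x} \<in> E" using y by (simp add: nbrs_def insert_commute)
      then show False using v_edge x by blast
    qed
    then show "y \<in> nbrs E' x" using y x by (auto simp: nbrs_def)
  qed
  then show ?thesis by auto
qed

lemma graph': "graph V' E'"
  unfolding graph_def
proof (intro conjI ballI)
  show "finite V'" using g by (simp add: graph_def)
  fix e assume e: "e \<in> E'"
  show "card e = 2"
  proof (cases "e = {b, u}")
    case True then show ?thesis using dist by simp
  next
    case False then show ?thesis using e g by (auto simp: graph_def)
  qed
  show "e \<subseteq> V'"
  proof (cases "e = {b, u}")
    case True then show ?thesis using dist inV ab by auto
  next
    case False
    then have eE: "e \<in> E" "v \<notin> e" using e by auto
    then have "card e = 2" "e \<subseteq> V" using g by (auto simp: graph_def)
    then obtain x y where xy: "e = {x, y}" by (auto simp: card_2_iff)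
    have "a \<notin> e"
    proof
      assume "a \<in> e"
      then have "{a, x} \<in> E \<or> {a, y} \<in> E" using xy eE(1) by (auto simp: insert_commute)
      then have "x = v \<or> y = v \<or> x = a \<and> y = a" using a_edge xy \<open>a \<in> e\<close> by auto
      then show False using eE(2) xy \<open>card e = 2\<close> by auto
    qed
    then show ?thesis using \<open>e \<subseteq> V\<close> eE(2) by auto
  qed
qed

end



context cherry_ctx begin

lemma conn_u: "y \<in> V' \<Longrightarrow> connected_in V' E' u y"
proof -
  assume yV': "y \<in> V'"
  have "connected_in V E u y" using bpt_conn[OF bpt inV(3)] yV' by simp
  then have r: "(u, y) \<in> (Rel V E)\<^sup>*" by (simp add: conn_iff)
  have "t \<notin> {a, v} \<longrightarrow> (u, t) \<in> (Rel V' E')\<^sup>*" if "(u, t) \<in> (Rel V E)\<^sup>*" for t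
    using that
  proof (induction rule: rtrancl_induct)
    case base then show ?case by simp
  next
    case (step s t)
    have st: "s \<in> V" "t \<in> V" "{s, t} \<in> E" using step.hyps(2) by (simp_all add: Rel_def)
    show ?case
    proof
      assume t: "t \<notin> {a, v}"
      show "(u, t) \<in> (Rel V' E')\<^sup>*"
      proof (cases "s \<in> {a, v}")
        case False
        then have "(s, t) \<in> Rel V' E'" using st t by (auto simp: Rel_def)
        then show ?thesis using step.IH False by (meson rtrancl_into_rtrancl)
      next
        case True
        show ?thesis
        proof (cases "s = a")
          case True
          then show ?thesis using a_edge st(3) t by auto
        next
          case False
          then have "s = v" using True by simp
          then have "t = b \<or> t = u" using v_edge st(3) t by auto
          then show ?thesis
          proof
            assume "t = b"
            have "(u, b) \<in> Rel V' E'" using inV dist ab by (auto simp: Rel_def insert_commute)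
            then show ?thesis using \<open>t = b\<close> by simp
          qed simp
        qed
      qed
    qed
  qed
  then have "(u, y) \<in> (Rel V' E')\<^sup>*" using r yV' by simp
  moreover have "u \<in> V'" using inV dist by simp
  ultimately show ?thesis using yV' by (simp add: conn_iff)
qed

lemma conn': "x \<in> V' \<Longrightarrow> y \<in> V' \<Longrightarrow> connected_in V' E' x y"
proof -
  assume "x \<in> V'" "y \<in> V'"
  then have "connected_in V' E' u x" "connected_in V' E' u y" using conn_u by simp_all
  then show ?thesis by (rule conn_trans[OF conn_sym])
qed

lemma acyclic': "\<not> is_cycle E' cs"
proof
  assume cyc: "is_cycle E' cs"
  have bn: "b \<notin> set cs"
  proof
    assume "b \<in> set cs"
    then obtain y1 y2 where "y1 \<noteq> y2" "{b, y1} \<in> E'" "{b, y2} \<in> E'" using cyc_nb[OF cyc] by blast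
    then have "y1 \<in> nbrs E' b" "y2 \<in> nbrs E' b" by (simp_all add: nbrs_def)
    then show False using nbrs'_b \<open>y1 \<noteq> y2\<close> by simp
  qed
  have "is_cycle E cs"
    unfolding is_cycle_def
  proof (intro conjI allI impI)
    show "3 \<le> length cs" "distinct cs" using cyc by (simp_all add: is_cycle_def)
    fix i assume i: "i < length cs"
    have e: "{cs ! i, cs ! ((i + 1) mod length cs)} \<in> E'" using cyc i by (simp add: is_cycle_def)
    have "length cs > 0" using i by linarith
    then have "(i + 1) mod length cs < length cs" by (rule mod_less_divisor)
    then have "cs ! i \<in> set cs" "cs ! ((i + 1) mod length cs) \<in> set cs" using i nth_mem by blast+
    then have "cs ! i \<noteq> b" "cs ! ((i + 1) mod length cs) \<noteq> b" using bn by auto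
    then have "{cs ! i, cs ! ((i + 1) mod length cs)} \<noteq> {b, u}" by (auto simp: doubleton_eq_iff)
    then show "{cs ! i, cs ! ((i + 1) mod length cs)} \<in> E" using e by simp
  qed
  then show False using tree by (simp add: is_tree_def)
qed

lemma deg': "x \<in> V' \<Longrightarrow> degree E' x = (if x = b then 1 else degree E x)"
proof -
  assume x: "x \<in> V'"
  have dg: "degree E' x = card (nbrs E' x)" by (rule degree_nbrs[OF graph'])
  show ?thesis
  proof (cases "x = b")
    case True then show ?thesis using dg nbrs'_b by simp
  next
    case False
    show ?thesis
    proof (cases "x = u")
      case True
      have fin: "finite (nbrs E u)" using nbrs_sub[OF g] g by (meson finite_subset graph_def)
      have "v \<in> nbrs E u" using edges(3) by (simp add: nbrs_def insert_commute)
      moreover have "b \<notin> nbrs E u"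
      proof
        assume "b \<in> nbrs E u"
        then have "{b, u} \<in> E" by (simp add: nbrs_def insert_commute)
        then show False using b_edge dist by blast
      qed
      ultimately have "card (insert b (nbrs E u - {v})) = card (nbrs E u)"
        using fin by (simp add: card_insert_if card_Diff_singleton) (metis Suc_pred card_gt_0_iff empty_iff)
      then show ?thesis using dg True nbrs'_u False degree_nbrs[OF g] by simp
    next
      case False2: False
      then have "nbrs E' x = nbrs E x" using x False by (intro nbrs'_other) auto
      then show ?thesis using dg False degree_nbrs[OF g] by simp
    qed
  qed
qed

lemma bpt': "binary_phylo_tree (X - {a}) V' E'"
  unfolding binary_phylo_tree_def
proof (intro conjI)
  have "b \<in> V'" using inV dist ab by simp
  then have "V' \<noteq> {}" by blast
  moreover have "\<forall>x\<in>V'. \<forall>y\<in>V'. connected_in V' E' x y" using conn' by simp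
  moreover have "\<nexists>cs. is_cycle E' cs" using acyclic' by simp
  ultimately show "is_tree V' E'" unfolding is_tree_def using graph' by simp
  show "X - {a} \<subseteq> V'" using XV vI by auto
  have leafX: "x \<in> X \<longleftrightarrow> degree E x = 1" if "x \<in> V" for x
    using bpt that by (auto simp: binary_phylo_tree_def)
  have intX: "degree E x = 3" if "x \<in> V - X" for x
    using bpt that by (auto simp: binary_phylo_tree_def)
  show "{x \<in> V'. degree E' x = 1} = X - {a}"
  proof
    show "{x \<in> V'. degree E' x = 1} \<subseteq> X - {a}"
    proof
      fix x assume x: "x \<in> {x \<in> V'. degree E' x = 1}"
      then have xV: "x \<in> V'" and d1: "degree E' x = 1" by simp_all
      show "x \<in> X - {a}"
      proof (cases "x = b")
        case True then show ?thesis using bX ab by simp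
      next
        case False
        then have "degree E x = 1" using deg'[OF xV] d1 by simp
        then show ?thesis using leafX[of x] xV by simp
      qed
    qed
    show "X - {a} \<subseteq> {x \<in> V'. degree E' x = 1}"
    proof
      fix x assume x: "x \<in> X - {a}"
      then have "x \<in> V'" using XV vI by auto
      moreover have "degree E x = 1" using leafX[of x] x XV by auto
      ultimately show "x \<in> {x \<in> V'. degree E' x = 1}" using deg'[of x] by simp
    qed
  qed
  show "\<forall>x\<in>V' - (X - {a}). degree E' x = 3"
  proof
    fix x assume x: "x \<in> V' - (X - {a})"
    then have "x \<noteq> b" "x \<in> V - X" using bX by auto
    then show "degree E' x = 3" using deg'[of x] intX[of x] x by simp
  qed
qed

end



context cherry_ctx begin

lemma T1:
  assumes w: "w \<in> V' - X" and c: "connected_in (V' - {w}) E' x y"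
  shows "connected_in (V - {w}) E x y"
proof -
  have wne: "w \<noteq> v" "w \<noteq> b" "w \<noteq> a" using w bX by auto
  have sub: "Rel (V' - {w}) E' \<subseteq> (Rel (V - {w}) E)\<^sup>*"
  proof (rule subrelI)
    fix p q assume pq: "(p, q) \<in> Rel (V' - {w}) E'"
    then have pV: "p \<in> V' - {w}" "q \<in> V' - {w}" and e: "{p, q} \<in> E'" by (simp_all add: Rel_def)
    show "(p, q) \<in> (Rel (V - {w}) E)\<^sup>*"
    proof (cases "{p, q} = {b, u}")
      case False
      then have "{p, q} \<in> E" using e by simp
      then have "(p, q) \<in> Rel (V - {w}) E" using pV by (simp add: Rel_def)
      then show ?thesis by simp
    next
      case True
      then have uw: "u \<noteq> w" using pV by (auto simp: doubleton_eq_iff)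
      have bv: "(b, v) \<in> Rel (V - {w}) E" and vu: "(v, u) \<in> Rel (V - {w}) E"
        using edges inV wne uw by (simp_all add: Rel_def)
      have bu: "(b, u) \<in> (Rel (V - {w}) E)\<^sup>*" using bv vu by simp
      have ub: "(u, b) \<in> (Rel (V - {w}) E)\<^sup>*" using Rel_sym[OF bv] Rel_sym[OF vu] by simp
      show ?thesis using True bu ub by (auto simp: doubleton_eq_iff)
    qed
  qed
  have "(x, y) \<in> (Rel (V' - {w}) E')\<^sup>*" using c by (simp add: conn_iff)
  then have "(x, y) \<in> (Rel (V - {w}) E)\<^sup>*" using rtrancl_subset_rtrancl[OF sub] by blast
  moreover have "x \<in> V - {w}" "y \<in> V - {w}" using c by (auto simp: conn_iff)
  ultimately show ?thesis by (simp add: conn_iff)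
qed

lemma T2:
  assumes w: "w \<in> V' - X" and c: "connected_in (V - {w}) E x y" and xV: "x \<in> V'" and yV: "y \<in> V'"
  shows "connected_in (V' - {w}) E' x y"
proof -
  have wne: "w \<noteq> v" "w \<noteq> b" "w \<noteq> a" using w bX by auto
  let ?R = "Rel (V' - {w}) E'"
  have xw: "x \<noteq> w" using c by (simp add: conn_iff)
  have r: "(x, y) \<in> (Rel (V - {w}) E)\<^sup>*" using c by (simp add: conn_iff)
  have bV: "b \<in> V' - {w}" using inV dist ab wne by simp
  have inv: "(t \<notin> {a, v} \<longrightarrow> (x, t) \<in> ?R\<^sup>*) \<and> (t \<in> {a, v} \<longrightarrow> (x, b) \<in> ?R\<^sup>*)"
    if "(x, t) \<in> (Rel (V - {w}) E)\<^sup>*" for t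
    using that
  proof (induction rule: rtrancl_induct)
    case base then show ?case using xV by simp
  next
    case (step s t)
    have st: "s \<in> V - {w}" "t \<in> V - {w}" "{s, t} \<in> E" using step.hyps(2) by (simp_all add: Rel_def)
    show ?case
    proof (cases "s \<in> {a, v}")
      case False
      then have IH: "(x, s) \<in> ?R\<^sup>*" using step.IH by simp
      show ?thesis
      proof (cases "t \<in> {a, v}")
        case False2: False
        then have "(s, t) \<in> ?R" using False st by (auto simp: Rel_def)
        then show ?thesis using IH False2 by (meson rtrancl_into_rtrancl)
      next
        case True
        have "t \<noteq> a"
        proof
          assume "t = a"
          then have "{a, s} \<in> E" using st(3) by (simp add: insert_commute)
          then show False using a_edge False by auto
        qed
        then have "t = v" using True by simp
        then have "{v, s} \<in> E" using st(3) by (simp add: insert_commute)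
        then have "s = b \<or> s = u" using v_edge False by auto
        then have "(x, b) \<in> ?R\<^sup>*"
        proof
          assume "s = b" then show ?thesis using IH by simp
        next
          assume su: "s = u"
          have "(u, b) \<in> ?R" using st(1) su bV dist by (auto simp: Rel_def insert_commute)
          then show ?thesis using IH su by (meson rtrancl_into_rtrancl)
        qed
        then show ?thesis using True by simp
      qed
    next
      case True
      then have IH: "(x, b) \<in> ?R\<^sup>*" using step.IH by simp
      show ?thesis
      proof (cases "t \<in> {a, v}")
        case True then show ?thesis using IH by simp
      next
        case False
        have "s \<noteq> a"
        proof
          assume "s = a"
          then show False using a_edge st(3) False by auto
        qed
        then have "s = v" using True by simp
        then have "t = b \<or> t = u" using v_edge st(3) False by auto
        then have "(x, t) \<in> ?R\<^sup>*"
        proof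
          assume "t = b" then show ?thesis using IH by simp
        next
          assume tu: "t = u"
          have "(b, u) \<in> ?R" using st(2) tu bV dist by (auto simp: Rel_def)
          then show ?thesis using IH tu by (meson rtrancl_into_rtrancl)
        qed
        then show ?thesis using False by simp
      qed
    qed
  qed
  have "(x, y) \<in> ?R\<^sup>*" using inv[OF r] yV by simp
  moreover have "x \<in> V' - {w}" "y \<in> V' - {w}" using xV yV c by (auto simp: conn_iff)
  ultimately show ?thesis by (simp add: conn_iff)
qed

lemma conn_ab:
  assumes "w \<in> V - X" "w \<noteq> v"
  shows "connected_in (V - {w}) E a b"
proof -
  have "w \<noteq> a" "w \<noteq> b" using assms aX bX by auto
  then have "connected_in (V - {w}) E a v" "connected_in (V - {w}) E v b"
    using inV edges assms by (auto intro!: conn_edge simp: insert_commute)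
  then show ?thesis by (rule conn_trans)
qed

end



context cherry_ctx begin

lemma finX: "finite X"
  using XV g by (meson finite_subset graph_def)

lemma iso_a: "\<forall>y. connected_in (V - {v}) E a y \<longrightarrow> y = a"
  using isolated[OF na] by blast

lemma iso_b: "\<forall>y. connected_in (V - {v}) E b y \<longrightarrow> y = b"
  using isolated[OF nb] by blast

lemma iso_b': "\<forall>y. connected_in (V' - {u}) E' b y \<longrightarrow> y = b"
  using isolated[OF nbrs'_b] by blast

lemma connV: "\<forall>y\<in>V. connected_in V E y v"
  using bpt_conn[OF bpt _ inV(4)] by blast

lemma pairs3:
  assumes "{x, y} \<in> T" "{x, z} \<in> T" "{y, z} \<in> T"
  shows "\<forall>p\<in>{x, y, z}. \<forall>q\<in>{x, y, z}. p \<noteq> q \<longrightarrow> {p, q} \<in> T"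
  using assms by (auto simp: insert_commute)

lemma lower_step:
  assumes cov: "triplet_cover X V E T"
  shows "\<exists>T'. triplet_cover (X - {a}) V' E' T' \<and> card T' + 2 \<le> card T"
proof -
  have Tsub: "T \<subseteq> {p. p \<subseteq> X \<and> card p = 2}" using cov by (simp add: triplet_cover_def)
  have finT: "finite T" by (rule finite_subset[OF _ finite_Collect_subsets[OF finX]]) (use Tsub in auto)
  have "v \<in> interior X V" using vI by (simp add: interior_def)
  then obtain x y z where xyz: "x \<in> X" "y \<in> X" "z \<in> X" and sup: "supports V E T x y z v"
    using cov by (auto simp: triplet_cover_def)
  have xyzV: "x \<in> V - {v}" "y \<in> V - {v}" "z \<in> V - {v}" using sup by (simp_all add: supports_def)
  have d: "\<not> connected_in (V - {v}) E x y" "\<not> connected_in (V - {v}) E x z"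
      "\<not> connected_in (V - {v}) E y z" using sup by (simp_all add: supports_def)
  have pT: "\<forall>p\<in>{x, y, z}. \<forall>q\<in>{x, y, z}. p \<noteq> q \<longrightarrow> {p, q} \<in> T"
    by (rule pairs3) (use sup in \<open>simp_all add: supports_def\<close>)
  have ne: "x \<noteq> y" "x \<noteq> z" "y \<noteq> z" using d conn_refl xyzV by metis+
  have "a \<in> {x, y, z}"
    by (rule three_classes[where ?n2.0=b and ?n3.0=u, OF connV _ iso_a xyzV d]) (use nv in simp)
  moreover have "b \<in> {x, y, z}"
    by (rule three_classes[where ?n2.0=a and ?n3.0=u, OF connV _ iso_b xyzV d]) (use nv in auto)
  ultimately have "\<exists>c. c \<in> {x, y, z} \<and> c \<noteq> a \<and> c \<noteq> b" using ne ab by auto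
  then obtain c where c: "c \<in> {x, y, z}" "c \<noteq> a" "c \<noteq> b" by blast
  have cX: "c \<in> X" using c xyz by auto
  have abT: "{a, b} \<in> T" "{a, c} \<in> T" "{b, c} \<in> T"
    using pT \<open>a \<in> {x, y, z}\<close> \<open>b \<in> {x, y, z}\<close> c ab by auto
  define \<phi> where "\<phi> t = (if t = a then b else t)" for t
  define F where "F p = \<phi> ` p" for p
  define T' where "T' = F ` (T - {{a, b}})"
  have Fac: "F {a, c} = {b, c}" and Fbc: "F {b, c} = {b, c}" using c ab by (auto simp: F_def \<phi>_def)
  have "T' = F ` (T - {{a, b}, {a, c}})"
  proof
    show "F ` (T - {{a, b}, {a, c}}) \<subseteq> T'" unfolding T'_def by auto
    show "T' \<subseteq> F ` (T - {{a, b}, {a, c}})"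
    proof
      fix p assume "p \<in> T'"
      then obtain q where q: "q \<in> T - {{a, b}}" "p = F q" by (auto simp: T'_def)
      show "p \<in> F ` (T - {{a, b}, {a, c}})"
      proof (cases "q = {a, c}")
        case True
        have "{b, c} \<in> T - {{a, b}, {a, c}}" using abT c ab by (auto simp: doubleton_eq_iff)
        then show ?thesis using q True Fac Fbc by (metis image_eqI)
      next
        case False then show ?thesis using q by auto
      qed
    qed
  qed
  then have "card T' \<le> card (T - {{a, b}, {a, c}})" using finT by (simp add: card_image_le)
  also have "\<dots> = card T - 2"
  proof -
    have "{{a, b}, {a, c}} \<subseteq> T" using abT by simp
    moreover have "card {{a, b}, {a, c}} = 2" using c ab by (simp add: doubleton_eq_iff)
    ultimately show ?thesis using finT by (simp add: card_Diff_subset)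
  qed
  finally have cardT': "card T' + 2 \<le> card T"
  proof -
    assume "card T' \<le> card T - 2"
    moreover have "card T \<ge> 2"
    proof -
      have "{{a, b}, {a, c}} \<subseteq> T" using abT by simp
      then have "card {{a, b}, {a, c}} \<le> card T" using finT by (rule card_mono[rotated])
      moreover have "card {{a, b}, {a, c}} = 2" using c ab by (simp add: doubleton_eq_iff)
      ultimately show ?thesis by simp
    qed
    ultimately show ?thesis by simp
  qed
  have phiX: "\<phi> s \<in> X - {a}" if "s \<in> X" for s using that bX ab by (auto simp: \<phi>_def)
  have key: "\<not> connected_in (V' - {w}) E' (\<phi> s) (\<phi> t) \<and> F {s, t} \<in> T'"
    if w: "w \<in> V - X" "w \<noteq> v" and st: "s \<in> X" "t \<in> X" "{s, t} \<in> T"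
      and nc: "\<not> connected_in (V - {w}) E s t" for w s t
  proof
    have wV': "w \<in> V' - X" using w aX by auto
    have sV: "s \<in> V - {w}" "t \<in> V - {w}" using st XV w by auto
    have cs: "connected_in (V - {w}) E s (\<phi> s)" if "s \<in> V - {w}" for s
    proof (cases "s = a")
      case True then show ?thesis using conn_ab[OF w] by (simp add: \<phi>_def)
    next
      case False then show ?thesis using conn_refl[OF that] by (simp add: \<phi>_def)
    qed
    show "\<not> connected_in (V' - {w}) E' (\<phi> s) (\<phi> t)"
    proof
      assume "connected_in (V' - {w}) E' (\<phi> s) (\<phi> t)"
      then have "connected_in (V - {w}) E (\<phi> s) (\<phi> t)" by (rule T1[OF wV'])
      then have "connected_in (V - {w}) E s (\<phi> t)" by (rule conn_trans[OF cs[OF sV(1)]])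
      then have "connected_in (V - {w}) E s t" by (rule conn_trans[OF _ conn_sym[OF cs[OF sV(2)]]])
      then show False using nc by simp
    qed
    have "{s, t} \<noteq> {a, b}"
    proof
      assume "{s, t} = {a, b}"
      then have "connected_in (V - {w}) E s t \<or> connected_in (V - {w}) E t s"
        using conn_ab[OF w] by (auto simp: doubleton_eq_iff)
      then show False using nc conn_sym by metis
    qed
    then show "F {s, t} \<in> T'" using st(3) by (auto simp: T'_def)
  qed
  have "triplet_cover (X - {a}) V' E' T'"
    unfolding triplet_cover_def
  proof (intro conjI ballI)
    show "T' \<subseteq> {p. p \<subseteq> X - {a} \<and> card p = 2}"
    proof
      fix p assume "p \<in> T'"
      then obtain q where q: "q \<in> T" "q \<noteq> {a, b}" "p = F q" by (auto simp: T'_def)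
      then have "q \<subseteq> X" "card q = 2" using Tsub by auto
      then obtain s t where st: "q = {s, t}" "s \<noteq> t" "s \<in> X" "t \<in> X" by (auto simp: card_2_iff)
      have "\<phi> s \<noteq> \<phi> t" using st q(2) by (auto simp: \<phi>_def)
      then show "p \<in> {p. p \<subseteq> X - {a} \<and> card p = 2}"
        using q(3) st phiX by (auto simp: F_def)
    qed
    fix w assume "w \<in> interior (X - {a}) V'"
    then have w: "w \<in> V - X" "w \<noteq> v" using aX by (auto simp: interior_def)
    then have "w \<in> interior X V" by (simp add: interior_def)
    then obtain x y z where xyz: "x \<in> X" "y \<in> X" "z \<in> X" and sup: "supports V E T x y z w"
      using cov by (auto simp: triplet_cover_def)
    have p: "{x, y} \<in> T" "{x, z} \<in> T" "{y, z} \<in> T" using sup by (simp_all add: supports_def)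
    have d: "\<not> connected_in (V - {w}) E x y" "\<not> connected_in (V - {w}) E x z"
      "\<not> connected_in (V - {w}) E y z" using sup by (simp_all add: supports_def)
    have k1: "\<not> connected_in (V' - {w}) E' (\<phi> x) (\<phi> y) \<and> F {x, y} \<in> T'" by (rule key[OF w xyz(1,2) p(1) d(1)])
    have k2: "\<not> connected_in (V' - {w}) E' (\<phi> x) (\<phi> z) \<and> F {x, z} \<in> T'" by (rule key[OF w xyz(1,3) p(2) d(2)])
    have k3: "\<not> connected_in (V' - {w}) E' (\<phi> y) (\<phi> z) \<and> F {y, z} \<in> T'" by (rule key[OF w xyz(2,3) p(3) d(3)])
    have inV': "\<phi> x \<in> V' - {w}" "\<phi> y \<in> V' - {w}" "\<phi> z \<in> V' - {w}"
      using phiX xyz XV vI w by auto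
    have "supports V' E' T' (\<phi> x) (\<phi> y) (\<phi> z) w"
      unfolding supports_def using k1 k2 k3 inV' by (simp add: F_def)
    then show "\<exists>a'\<in>X - {a}. \<exists>b'\<in>X - {a}. \<exists>c'\<in>X - {a}. supports V' E' T' a' b' c' w"
      using phiX xyz by blast
  qed
  then show ?thesis using cardT' by blast
qed

end



context cherry_ctx begin

lemma exist_step:
  assumes cov: "triplet_cover (X - {a}) V' E' T"
  shows "\<exists>T2. triplet_cover X V E T2 \<and> card T2 = card T + 2"
proof -
  have Tsub: "T \<subseteq> {p. p \<subseteq> X - {a} \<and> card p = 2}" using cov by (simp add: triplet_cover_def)
  have finT: "finite T" by (rule finite_subset[OF _ finite_Collect_subsets[OF finX]]) (use Tsub in auto)
  have uI': "u \<in> interior (X - {a}) V'" using uI dist by (auto simp: interior_def)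
  have "\<exists>x\<in>X - {a}. \<exists>y\<in>X - {a}. \<exists>z\<in>X - {a}. supports V' E' T x y z u"
    using cov uI' unfolding triplet_cover_def by blast
  then obtain x y z where xyz: "x \<in> X - {a}" "y \<in> X - {a}" "z \<in> X - {a}" and sup: "supports V' E' T x y z u"
    by blast
  have xyzV: "x \<in> V' - {u}" "y \<in> V' - {u}" "z \<in> V' - {u}" using sup by (simp_all add: supports_def)
  have d: "\<not> connected_in (V' - {u}) E' x y" "\<not> connected_in (V' - {u}) E' x z"
      "\<not> connected_in (V' - {u}) E' y z" using sup by (simp_all add: supports_def)
  have pT: "\<forall>p\<in>{x, y, z}. \<forall>q\<in>{x, y, z}. p \<noteq> q \<longrightarrow> {p, q} \<in> T"
    by (rule pairs3) (use sup in \<open>simp_all add: supports_def\<close>)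
  have ne: "x \<noteq> y" "x \<noteq> z" "y \<noteq> z" using d conn_refl xyzV by metis+
  obtain p1 p2 p3 where pp: "nbrs E u = {p1, p2, p3}" using bpt_int[OF bpt uI] by blast
  have vin: "v \<in> nbrs E u" using edges(3) by (simp add: nbrs_def insert_commute)
  have "\<exists>q1 q2. nbrs E u - {v} \<subseteq> {q1, q2}"
  proof -
    have "v = p1 \<or> v = p2 \<or> v = p3" using vin pp by simp
    then show ?thesis
    proof (elim disjE)
      assume "v = p1" then show ?thesis using pp by (intro exI[of _ p2] exI[of _ p3]) auto
    next
      assume "v = p2" then show ?thesis using pp by (intro exI[of _ p1] exI[of _ p3]) auto
    next
      assume "v = p3" then show ?thesis using pp by (intro exI[of _ p1] exI[of _ p2]) auto
    qed
  qed
  then obtain q1 q2 where qq: "nbrs E u - {v} \<subseteq> {q1, q2}" by blast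
  have nbu: "nbrs E' u \<subseteq> {b, q1, q2}" using qq nbrs'_u by auto
  have connV': "\<forall>y\<in>V'. connected_in V' E' y u"
  proof
    fix y assume "y \<in> V'"
    moreover have "u \<in> V'" using inV dist by simp
    ultimately show "connected_in V' E' y u" by (rule conn')
  qed
  have "b \<in> {x, y, z}"
    by (rule three_classes[OF connV' nbu iso_b' xyzV d])
  then have "\<exists>c. c \<in> {x, y, z} \<and> c \<noteq> b" using ne by auto
  then obtain c where c: "c \<in> {x, y, z}" "c \<noteq> b" by blast
  have cX: "c \<in> X - {a}" using c xyz by auto
  have bcT: "{b, c} \<in> T" using pT \<open>b \<in> {x, y, z}\<close> c by auto
  define T2 where "T2 = insert {a, b} (insert {a, c} T)"
  have nab: "{a, b} \<notin> T" "{a, c} \<notin> T" using Tsub by auto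
  have abac: "{a, b} \<noteq> {a, c}" using c ab by (auto simp: doubleton_eq_iff)
  have card2: "card T2 = card T + 2" using finT nab abac by (simp add: T2_def)
  have "triplet_cover X V E T2"
    unfolding triplet_cover_def
  proof (intro conjI ballI)
    show "T2 \<subseteq> {p. p \<subseteq> X \<and> card p = 2}"
      using Tsub cX aX bX ab by (auto simp: T2_def)
    fix w assume "w \<in> interior X V"
    then have w: "w \<in> V - X" by (simp add: interior_def)
    show "\<exists>a'\<in>X. \<exists>b'\<in>X. \<exists>c'\<in>X. supports V E T2 a' b' c' w"
    proof (cases "w = v")
      case True
      have abcV: "a \<in> V - {v}" "b \<in> V - {v}" "c \<in> V - {v}" using inV dist cX XV vI by auto
      have d1: "\<not> connected_in (V - {v}) E a b" using iso_a ab by metis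
      have d2: "\<not> connected_in (V - {v}) E a c" using iso_a cX by auto
      have d3: "\<not> connected_in (V - {v}) E b c" using iso_b c(2) by metis
      have "supports V E T2 a b c v"
        unfolding supports_def using abcV d1 d2 d3 bcT by (simp add: T2_def)
      then show ?thesis using True aX bX cX by blast
    next
      case False
      then have wI: "w \<in> interior (X - {a}) V'" using w aX by (auto simp: interior_def)
      have wV': "w \<in> V' - X" using w False aX by auto
      have "\<exists>x\<in>X - {a}. \<exists>y\<in>X - {a}. \<exists>z\<in>X - {a}. supports V' E' T x y z w"
        using cov wI unfolding triplet_cover_def by blast
      then obtain x y z where xyz: "x \<in> X - {a}" "y \<in> X - {a}" "z \<in> X - {a}"
        and sup: "supports V' E' T x y z w" by blast
      have inV': "x \<in> V' - {w}" "y \<in> V' - {w}" "z \<in> V' - {w}" using sup by (simp_all add: supports_def)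
      have nc: "\<not> connected_in (V - {w}) E s t"
        if "\<not> connected_in (V' - {w}) E' s t" "s \<in> V' - {w}" "t \<in> V' - {w}" for s t
      proof
        assume "connected_in (V - {w}) E s t"
        then have "connected_in (V' - {w}) E' s t" using T2[OF wV'] that(2,3) by simp
        then show False using that(1) by simp
      qed
      have "supports V E T2 x y z w"
        unfolding supports_def
      proof (intro conjI)
        show "x \<in> V - {w}" "y \<in> V - {w}" "z \<in> V - {w}" using inV' by auto
        show "\<not> connected_in (V - {w}) E x y" by (rule nc) (use sup inV' in \<open>simp_all add: supports_def\<close>)
        show "\<not> connected_in (V - {w}) E x z" by (rule nc) (use sup inV' in \<open>simp_all add: supports_def\<close>)
        show "\<not> connected_in (V - {w}) E y z" by (rule nc) (use sup inV' in \<open>simp_all add: supports_def\<close>)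
        show "{x, y} \<in> T2" "{x, z} \<in> T2" "{y, z} \<in> T2" using sup by (simp_all add: supports_def T2_def)
      qed
      then show ?thesis using xyz by blast
    qed
  qed
  then show ?thesis using card2 by blast
qed

end



lemma base_lower:
  assumes bpt: "binary_phylo_tree X V E" and fin: "finite X" and c3: "card X = 3"
    and cov: "triplet_cover X V E T"
  shows "card T \<ge> 3"
proof -
  have Tsub: "T \<subseteq> {p. p \<subseteq> X \<and> card p = 2}" using cov by (simp add: triplet_cover_def)
  have finT: "finite T" by (rule finite_subset[OF _ finite_Collect_subsets[OF fin]]) (use Tsub in auto)
  have "X \<noteq> {}" using c3 by auto
  then obtain x where x: "x \<in> X" by blast
  obtain y where ny: "nbrs E x = {y}" using bpt_leaf[OF bpt x] by blast
  have yI: "y \<in> V - X" using leaf_nbr_int[OF bpt fin _ x] ny c3 by simp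
  then have "y \<in> interior X V" by (simp add: interior_def)
  then have "\<exists>p\<in>X. \<exists>q\<in>X. \<exists>r\<in>X. supports V E T p q r y"
    using cov unfolding triplet_cover_def by blast
  then obtain p q r where sup: "supports V E T p q r y" by blast
  have pV: "p \<in> V - {y}" "q \<in> V - {y}" "r \<in> V - {y}" using sup by (simp_all add: supports_def)
  have d: "\<not> connected_in (V - {y}) E p q" "\<not> connected_in (V - {y}) E p r"
      "\<not> connected_in (V - {y}) E q r" using sup by (simp_all add: supports_def)
  have ne: "p \<noteq> q" "p \<noteq> r" "q \<noteq> r" using d conn_refl pV by metis+
  have sub: "{{p, q}, {p, r}, {q, r}} \<subseteq> T" using sup by (simp add: supports_def)
  have "card {{p, q}, {p, r}, {q, r}} = 3" using ne by (auto simp: doubleton_eq_iff card_insert_if)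
  then show ?thesis using card_mono[OF finT sub] by simp
qed

lemma base_exist:
  assumes bpt: "binary_phylo_tree X V E" and fin: "finite X" and c3: "card X = 3"
  shows "\<exists>T. triplet_cover X V E T \<and> card T = 3"
proof -
  have "card {p. p \<subseteq> X \<and> card p = 2} = 3" using n_subsets[OF fin, of 2] c3 by (simp add: choose_two)
  then show ?thesis using allpairs_cover[OF bpt] by blast
qed

lemma main:
  assumes "n \<ge> 3"
  shows "\<forall>(X::'a set) V E. finite X \<longrightarrow> card X = n \<longrightarrow> binary_phylo_tree X V E \<longrightarrow>
    (\<forall>T. triplet_cover X V E T \<longrightarrow> card T \<ge> 2 * n - 3) \<and> (\<exists>T. triplet_cover X V E T \<and> card T = 2 * n - 3)"
  using assms
proof (induction n rule: nat_induct_at_least)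
  case base
  show ?case
  proof (intro allI impI conjI)
    fix X V :: "'a set" and E T
    assume a: "finite X" "card X = 3" "binary_phylo_tree X V E"
    show "triplet_cover X V E T \<Longrightarrow> card T \<ge> 2 * 3 - 3" using base_lower[OF a(3,1,2)] by simp
    show "\<exists>T. triplet_cover X V E T \<and> card T = 2 * 3 - 3" using base_exist[OF a(3,1,2)] by simp
  qed
next
  case (Suc n)
  show ?case
  proof (intro allI impI)
    fix X V :: "'a set" and E
    assume a: "finite X" "card X = Suc n" "binary_phylo_tree X V E"
    have c4: "card X \<ge> 4" using a(2) Suc.hyps by simp
    obtain ca cb cv cu where ch: "ca \<in> X" "cb \<in> X" "ca \<noteq> cb" "cv \<in> V - X" "cu \<in> V - X"
      "nbrs E cv = {ca, cb, cu}" "nbrs E ca = {cv}" "nbrs E cb = {cv}"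
      using cherry[OF a(3,1) c4] by blast
    interpret cherry_ctx X V E ca cb cv cu
      using ch a(3) by unfold_locales simp_all
    have cardX': "card (X - {ca}) = n" using a(1,2) ch(1) by simp
    have IH: "(\<forall>T. triplet_cover (X - {ca}) (V - {ca, cv}) ({e\<in>E. cv \<notin> e} \<union> {{cb, cu}}) T \<longrightarrow> card T \<ge> 2 * n - 3)
      \<and> (\<exists>T. triplet_cover (X - {ca}) (V - {ca, cv}) ({e\<in>E. cv \<notin> e} \<union> {{cb, cu}}) T \<and> card T = 2 * n - 3)"
      using Suc.IH[rule_format, OF _ cardX' bpt'] a(1) by simp
    show "(\<forall>T. triplet_cover X V E T \<longrightarrow> card T \<ge> 2 * Suc n - 3) \<and> (\<exists>T. triplet_cover X V E T \<and> card T = 2 * Suc n - 3)"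
    proof (intro conjI allI impI)
      fix T assume "triplet_cover X V E T"
      then obtain T' where t1: "triplet_cover (X - {ca}) (V - {ca, cv}) ({e\<in>E. cv \<notin> e} \<union> {{cb, cu}}) T'"
        and t2: "card T' + 2 \<le> card T" using lower_step by blast
      have "card T' \<ge> 2 * n - 3" using IH t1 by simp
      then show "card T \<ge> 2 * Suc n - 3" using t2 Suc.hyps by arith
    next
      obtain T' where "triplet_cover (X - {ca}) (V - {ca, cv}) ({e\<in>E. cv \<notin> e} \<union> {{cb, cu}}) T'"
        "card T' = 2 * n - 3" using IH by auto
      then obtain T2 where "triplet_cover X V E T2" "card T2 = 2 * n - 3 + 2" using exist_step by metis
      then show "\<exists>T. triplet_cover X V E T \<and> card T = 2 * Suc n - 3" using Suc.hyps
        by (intro exI[of _ T2]) arith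
    qed
  qed
qed

theorem proposition3:
  fixes X V :: "'a set" and E :: "'a set set"
  assumes "finite X" and "card X \<ge> 3" and "binary_phylo_tree X V E"
  shows "(\<forall>\<T>. triplet_cover X V E \<T> \<longrightarrow> card \<T> \<ge> 2 * card X - 3)
       \<and> (\<exists>\<T>. triplet_cover X V E \<T> \<and> card \<T> = 2 * card X - 3)"
  by (rule main[OF assms(2), rule_format, OF assms(1) refl assms(3)])


end
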